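(* (i) Let $\mathbf G=(G,\le,\cdot,\to,0,1)$ be a contrapositionally residuated po-groupoid and define $x/y:={\sim}x\to{\sim}y$. Then $\mathbf G'=(G,\le,\cdot,/,0,1)$ is a left-residuated po-groupoid satisfying the double negation law $\neg\neg x=x$ (where $\neg x:=0/x$); moreover $\neg x={\sim}x$ and $\neg x/\neg y=x\to y$ for all $x,y\in G$. (ii) Conversely, let $\mathbf G=(G,\le,\cdot,/,0,1)$ be a left-residuated po-groupoid satisfying $\neg\neg x=x$, and define $x\to y:=\neg x/\neg y$. Then $(G,\le,\cdot,\to,0,1)$ is a contrapositionally residuated po-groupoid, with ${\sim}x=\neg x$ and ${\sim}x\to{\sim}y=x/y$ for all $x,y\in G$. Hence contrapositionally residuated po-groupoids are equivalent (via these mutually inverse translations) to left-residuated po-groupoids satisfying the double negation law.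
   Context: A (bounded integral) left-residuated po-groupoid is a structure $\mathbf G=(G,\le,\cdot,/,0,1)$ where $(G,\le,0,1)$ is a bounded poset with least element $0$ and greatest element $1$, $\cdot$ is a binary operation on $G$ with $1\cdot x=x\cdot 1=x$ for all $x$ (no associativity, commutativity or monotonicity is assumed), and $/$ is a binary operation on $G$ satisfying the left residuation law: for all $x,y,z\in G$, $x\cdot y\le z\iff x\le z/y$. Its negation is $\neg x:=0/x$. A (bounded integral) contrapositionally residuated po-groupoid is a structure $\mathbf G=(G,\le,\cdot,\to,0,1)$ where $(G,\le,0,1)$ is a bounded poset with least element $0$ and greatest element $1$, $(G,\cdot,1)$ is a groupoid with identity $1$, and $\to$ is a binary operation such that for all $x,y,z\in G$: $1\to x=x$, and $x\cdot y\le z$ iff $x\le {\sim}z\to{\sim}y$, where ${\sim}x:=x\to 0$. *)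

theory Defs
  imports Main
begin

text \<open>The carrier G is represented by a type 'a; the order by le, multiplication
by m, the residual (/ or \<rightarrow>) by a binary operation, 0 by z and 1 by u.\<close>

definition bounded_poset :: "('a \<Rightarrow> 'a \<Rightarrow> bool) \<Rightarrow> 'a \<Rightarrow> 'a \<Rightarrow> bool" where
  "bounded_poset le z u \<longleftrightarrow>
     (\<forall>x. le x x) \<and> (\<forall>x y. le x y \<and> le y x \<longrightarrow> x = y) \<and>
     (\<forall>x y w. le x y \<and> le y w \<longrightarrow> le x w) \<and> (\<forall>x. le z x \<and> le x u)"

definition left_residuated_po_groupoid ::
  "('a \<Rightarrow> 'a \<Rightarrow> bool) \<Rightarrow> ('a \<Rightarrow> 'a \<Rightarrow> 'a) \<Rightarrow> ('a \<Rightarrow> 'a \<Rightarrow> 'a) \<Rightarrow> 'a \<Rightarrow> 'a \<Rightarrow> bool" where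
  "left_residuated_po_groupoid le m r z u \<longleftrightarrow>
     bounded_poset le z u \<and> (\<forall>x. m u x = x \<and> m x u = x) \<and>
     (\<forall>x y w. le (m x y) w \<longleftrightarrow> le x (r w y))"

definition contrap_residuated_po_groupoid ::
  "('a \<Rightarrow> 'a \<Rightarrow> bool) \<Rightarrow> ('a \<Rightarrow> 'a \<Rightarrow> 'a) \<Rightarrow> ('a \<Rightarrow> 'a \<Rightarrow> 'a) \<Rightarrow> 'a \<Rightarrow> 'a \<Rightarrow> bool" where
  "contrap_residuated_po_groupoid le m i z u \<longleftrightarrow>
     bounded_poset le z u \<and> (\<forall>x. m u x = x \<and> m x u = x) \<and>
     (\<forall>x. i u x = x) \<and>
     (\<forall>x y w. le (m x y) w \<longleftrightarrow> le x (i (i w z) (i y z)))"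

end

theory Submission
  imports Defs
begin

theorem mainTheorem8:
  fixes le :: "'a \<Rightarrow> 'a \<Rightarrow> bool" and m :: "'a \<Rightarrow> 'a \<Rightarrow> 'a" and z u :: 'a
  shows "(\<forall>i :: 'a \<Rightarrow> 'a \<Rightarrow> 'a. contrap_residuated_po_groupoid le m i z u \<longrightarrow>
            (let r = (\<lambda>x y. i (i x z) (i y z)) in
              left_residuated_po_groupoid le m r z u \<and>
              (\<forall>x. r z (r z x) = x) \<and>
              (\<forall>x. r z x = i x z) \<and>
              (\<forall>x y. r (r z x) (r z y) = i x y)))
       \<and> (\<forall>r :: 'a \<Rightarrow> 'a \<Rightarrow> 'a. left_residuated_po_groupoid le m r z u \<and> (\<forall>x. r z (r z x) = x) \<longrightarrow>
            (let i = (\<lambda>x y. r (r z x) (r z y)) in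
              contrap_residuated_po_groupoid le m i z u \<and>
              (\<forall>x. i x z = r z x) \<and>
              (\<forall>x y. i (i x z) (i y z) = r x y)))"
proof (intro conjI allI impI)
  fix i :: "'a \<Rightarrow> 'a \<Rightarrow> 'a"
  assume H: "contrap_residuated_po_groupoid le m i z u"
  have bp: "bounded_poset le z u" and mu: "\<And>x. m x u = x" and iu: "\<And>x. i u x = x"
    and res: "\<And>x y w. le (m x y) w \<longleftrightarrow> le x (i (i w z) (i y z))"
    using H unfolding contrap_residuated_po_groupoid_def by simp_all
  have refl: "\<And>x. le x x" and anti: "\<And>x y. le x y \<Longrightarrow> le y x \<Longrightarrow> x = y"
    using bp unfolding bounded_poset_def by metis+
  have uz: "i u z = z" by (rule iu)
  have dn: "\<And>w. i (i w z) z = w"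
  proof -
    fix w
    have e: "\<And>x. le x w \<longleftrightarrow> le x (i (i w z) z)" using res[of _ u w] mu uz by simp
    show "i (i w z) z = w" using e[of w] e[of "i (i w z) z"] refl anti by blast
  qed
  have zz: "i z z = u" using dn[of u] uz by simp
  show "let r = (\<lambda>x y. i (i x z) (i y z)) in
              left_residuated_po_groupoid le m r z u \<and>
              (\<forall>x. r z (r z x) = x) \<and>
              (\<forall>x. r z x = i x z) \<and>
              (\<forall>x y. r (r z x) (r z y) = i x y)"
  proof -
    let ?r = "\<lambda>x y. i (i x z) (i y z)"
    have c2: "\<forall>x. ?r z x = i x z" using zz iu by simp
    have c1: "\<forall>x. ?r z (?r z x) = x" using zz iu dn by simp
    have c3: "\<forall>x y. ?r (?r z x) (?r z y) = i x y" using c2 dn by simp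
    have c4: "\<forall>x y w. le (m x y) w \<longleftrightarrow> le x (?r w y)" using res by simp
    have c0: "\<forall>x. m u x = x \<and> m x u = x" using H unfolding contrap_residuated_po_groupoid_def by simp_all
    show ?thesis unfolding Let_def left_residuated_po_groupoid_def
      using bp c0 c1 c2 c3 c4 by blast
  qed
next
  fix r :: "'a \<Rightarrow> 'a \<Rightarrow> 'a"
  assume H: "left_residuated_po_groupoid le m r z u \<and> (\<forall>x. r z (r z x) = x)"
  have bp: "bounded_poset le z u" and mu: "\<And>x. m x u = x" and dn: "\<And>x. r z (r z x) = x"
    and res: "\<And>x y w. le (m x y) w \<longleftrightarrow> le x (r w y)"
    using H unfolding left_residuated_po_groupoid_def by simp_all
  have refl: "\<And>x. le x x" and anti: "\<And>x y. le x y \<Longrightarrow> le y x \<Longrightarrow> x = y"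
    using bp unfolding bounded_poset_def by metis+
  have ru: "\<And>w. r w u = w"
  proof -
    fix w
    have e: "\<And>x. le x w \<longleftrightarrow> le x (r w u)" using res[of _ u w] mu by simp
    show "r w u = w" using e[of w] e[of "r w u"] refl anti by blast
  qed
  have nu: "r z u = z" by (rule ru)
  have nz: "r z z = u" using dn[of u] nu by simp
  show "let i = (\<lambda>x y. r (r z x) (r z y)) in
              contrap_residuated_po_groupoid le m i z u \<and>
              (\<forall>x. i x z = r z x) \<and>
              (\<forall>x y. i (i x z) (i y z) = r x y)"
  proof -
    let ?i = "\<lambda>x y. r (r z x) (r z y)"
    have c1: "\<forall>x. ?i u x = x" using dn nu by simp
    have c2: "\<forall>x. ?i x z = r z x" using nz ru by simp
    have c3: "\<forall>x y. ?i (?i x z) (?i y z) = r x y" using c2 dn by simp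
    have c4: "\<forall>x y w. le (m x y) w \<longleftrightarrow> le x (?i (?i w z) (?i y z))" using c3 res by simp
    have c0: "\<forall>x. m u x = x \<and> m x u = x" using H unfolding left_residuated_po_groupoid_def by simp_all
    show ?thesis unfolding Let_def contrap_residuated_po_groupoid_def
      using bp c0 c1 c2 c3 c4 by blast
  qed
qed

end
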